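(* $$\lim_{t \to \infty} \sum_{n=0}^{\infty} N_{0,n}(t) = 2,$$ where $t\to\infty$ through the real numbers.
   Context: $N_{0,n}$ denotes the uniform B-spline of degree $n$ with knots $0,1,\ldots,n+1$ and support $[0,n+1]$: $N_{0,0}(t)=\chi_{[0,1]}(t)$ (the indicator of $[0,1]$) and $N_{0,n}(t)=\int_{-\infty}^{\infty} N_{0,n-1}(x)\chi_{[0,1]}(t-x)\,dx = \int_{t-1}^{t}N_{0,n-1}(x)\,dx$ for $n\ge1$; i.e. $N_{0,n}$ is the $(n+1)$-fold convolution of $\chi_{[0,1]}$ with itself (the Irwin–Hall density of a sum of $n+1$ independent Uniform$(0,1)$ variables). *)

theory Defs
  imports "HOL-Analysis.Analysis"
begin

text \<open>Uniform B-spline N_{0,n} of degree n with knots 0,1,...,n+1: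
  N_{0,0} = indicator of [0,1], and
  N_{0,n}(t) = integral over [t-1,t] of N_{0,n-1}
  (the convolution of N_{0,n-1} with the indicator of [0,1]).\<close>
fun bspline :: "nat \<Rightarrow> real \<Rightarrow> real" where
  "bspline 0 t = indicator {0..1} t"
| "bspline (Suc n) t = integral {t - 1..t} (bspline n)"

end

theory Submission
  imports Defs
begin

lemma window_cont:
  fixes f :: "real \<Rightarrow> real"
  assumes "\<And>a b. f integrable_on {a..b}"
  shows "continuous_on {a..b} (\<lambda>t. integral {t-1..t} f)"
proof -
  define I where "I x = integral {a-1..x} f" for x
  have cI: "continuous_on {a-1..b} I"
    unfolding I_def by (rule indefinite_integral_continuous_1[OF assms])
  have eq: "integral {t-1..t} f = I t - I (t-1)" if "t \<in> {a..b}" for t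
  proof -
    have "integral {a-1..t-1} f + integral {t-1..t} f = integral {a-1..t} f"
      by (rule Henstock_Kurzweil_Integration.integral_combine) (use that assms in auto)
    then show ?thesis unfolding I_def by linarith
  qed
  have c1: "continuous_on {a..b} I" by (rule continuous_on_subset[OF cI]) simp
  have c2: "continuous_on {a..b} (\<lambda>t. I (t-1))"
  proof (rule continuous_on_compose2[OF cI, where f="\<lambda>t. t - 1"])
    show "continuous_on {a..b} (\<lambda>t::real. t - 1)" by (intro continuous_on_diff continuous_on_id continuous_on_const)
  qed auto
  have "continuous_on {a..b} (\<lambda>t. I t - I (t-1))" by (rule continuous_on_diff[OF c1 c2])
  moreover have "continuous_on {a..b} (\<lambda>t. integral {t-1..t} f) = continuous_on {a..b} (\<lambda>t. I t - I (t-1))"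
    by (rule continuous_on_cong) (simp_all add: eq)
  ultimately show ?thesis by simp
qed

lemma N_int: "bspline n integrable_on {a..b}"
proof (induction n arbitrary: a b)
  case 0
  show ?case by (simp add: integrable_on_indicator)
next
  case (Suc n)
  have "continuous_on {a..b} (bspline (Suc n))"
    using window_cont[of "bspline n" a b] Suc by simp
  then show ?case by (rule integrable_continuous_interval)
qed

lemma N_nonneg: "0 \<le> bspline n x"
proof (induction n arbitrary: x)
  case 0 then show ?case by simp
next
  case (Suc n) then show ?case by (simp add: integral_nonneg N_int)
qed

lemma N_neg: "x < 0 \<Longrightarrow> bspline n x = 0"
proof (induction n arbitrary: x)
  case 0 then show ?case by simp
next
  case (Suc n)
  have "integral {x-1..x} (bspline n) = integral {x-1..x} (\<lambda>_. 0::real)"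
    using Suc by (intro integral_cong) auto
  then show ?case by simp
qed

lemma int_exp2:
  fixes a b :: real
  assumes "a \<le> b"
  shows "integral {a..b} (\<lambda>x. exp (2*x)) = (exp (2*b) - exp (2*a)) / 2"
proof -
  have d: "((\<lambda>x. exp (2*x) / 2) has_vector_derivative exp (2*x)) (at x within {a..b})" for x
  proof -
    have "((\<lambda>x. exp (2*x) / 2) has_real_derivative exp (2*x)) (at x within {a..b})"
      by (auto intro!: derivative_eq_intros)
    then show ?thesis by (simp add: has_real_derivative_iff_has_vector_derivative)
  qed
  have "((\<lambda>x. exp (2*x)) has_integral (exp (2*b)/2 - exp (2*a)/2)) {a..b}"
    using Henstock_Kurzweil_Integration.fundamental_theorem_of_calculus[where a=a and b=b and f="\<lambda>x. exp (2*x) / 2" and f'="\<lambda>x. exp (2*x)"] assms d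
    by simp
  then show ?thesis by (simp add: integral_unique diff_divide_distrib)
qed

lemma N_bound: "bspline n x \<le> exp (2*x) / 2^n"
proof (induction n arbitrary: x)
  case 0 then show ?case by (auto simp: indicator_def)
next
  case (Suc n)
  have "bspline (Suc n) x \<le> integral {x-1..x} (\<lambda>y. exp (2*y) / 2^n)"
    unfolding bspline.simps
    by (rule integral_le) (use Suc in \<open>auto intro!: N_int integrable_continuous_interval continuous_intros\<close>)
  also have "\<dots> = integral {x-1..x} (\<lambda>y. exp (2*y)) / 2^n"
    by (simp add: divide_inverse)
  also have "\<dots> = (exp (2*x) - exp (2*(x-1))) / 2 / 2^n" by (simp add: int_exp2)
  also have "\<dots> \<le> exp (2*x) / 2^Suc n" by (simp add: divide_right_mono field_simps)
  finally show ?case .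
qed


definition SS :: "real \<Rightarrow> real" where "SS t = (\<Sum>n. bspline n t)"

lemma pow_half: "exp (2*t) / 2^n = exp (2*t) * (1/2::real)^n"
  by (simp add: power_one_over)

lemma N_bound': "norm (bspline n t) \<le> exp (2*t) * (1/2)^n"
  by (simp only: real_norm_def abs_of_nonneg[OF N_nonneg] pow_half[symmetric] N_bound)

lemma geo_sum: "summable (\<lambda>n. exp (2*t) * (1/2::real)^n)"
  by (intro summable_mult summable_geometric) simp

lemma N_summable: "summable (\<lambda>n. bspline n t)"
  by (rule summable_comparison_test'[OF geo_sum N_bound'])

lemma SS_le: "SS t \<le> 2 * exp (2*t)"
proof -
  have "SS t \<le> (\<Sum>n. exp (2*t) * (1/2::real)^n)"
    unfolding SS_def
  proof (rule suminf_le[OF _ N_summable geo_sum])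
    show "bspline n t \<le> exp (2*t) * (1/2)^n" for n
      using N_bound'[of n t] by (metis abs_ge_self order_trans real_norm_def)
  qed
  also have "\<dots> = exp (2*t) * 2"
    by (simp add: suminf_mult suminf_geometric)
  finally show ?thesis by simp
qed

lemma SS_nonneg: "0 \<le> SS t"
  unfolding SS_def by (intro suminf_nonneg N_summable N_nonneg)

lemma SS_neg: "t < 0 \<Longrightarrow> SS t = 0"
  unfolding SS_def by (simp add: N_neg)

lemma SS_int: "SS integrable_on {a..b} \<and> (\<lambda>n. integral {a..b} (bspline n)) sums integral {a..b} SS"
proof -
  define f where "f k x = (\<Sum>n<k. bspline n x)" for k x
  define C where "C = max 0 (b - a) * (2 * exp (2*b))"
  have fi: "f k integrable_on {a..b}" for k
    unfolding f_def by (intro integrable_sum N_int) auto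
  have mono: "f k x \<le> f (Suc k) x" for k x
    unfolding f_def by (simp add: N_nonneg)
  have lim: "(\<lambda>k. f k x) \<longlonglongrightarrow> SS x" for x
    unfolding f_def SS_def by (rule summable_LIMSEQ[OF N_summable])
  have fle: "f k x \<le> 2 * exp (2*b)" if "x \<in> {a..b}" for k x
  proof -
    have "f k x \<le> SS x" unfolding f_def SS_def
      by (intro sum_le_suminf N_summable) (auto simp: N_nonneg)
    also have "\<dots> \<le> 2 * exp (2*x)" by (rule SS_le)
    also have "\<dots> \<le> 2 * exp (2*b)" using that by simp
    finally show ?thesis .
  qed
  have f0: "0 \<le> f k x" for k x unfolding f_def by (intro sum_nonneg N_nonneg)
  have bnd: "\<bar>integral {a..b} (f k)\<bar> \<le> C" for k
  proof -
    have "0 \<le> integral {a..b} (f k)" by (intro integral_nonneg fi f0)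
    moreover have "integral {a..b} (f k) \<le> integral {a..b} (\<lambda>_. 2 * exp (2*b))"
      by (intro integral_le fi fle) auto
    moreover have "integral {a..b} (\<lambda>_. 2 * exp (2*b)) \<le> C"
      unfolding C_def by (cases "a \<le> b") auto
    ultimately show ?thesis by linarith
  qed
  have "bounded (range (\<lambda>k. integral {a..b} (f k)))"
    unfolding bounded_iff by (intro exI[of _ C]) (auto simp: bnd)
  from monotone_convergence_increasing[OF fi mono lim this]
  have *: "SS integrable_on {a..b}" "(\<lambda>k. integral {a..b} (f k)) \<longlonglongrightarrow> integral {a..b} SS"
    by auto
  have "integral {a..b} (f k) = (\<Sum>n<k. integral {a..b} (bspline n))" for k
    unfolding f_def by (intro integral_sum N_int) auto
  with * show ?thesis unfolding sums_def by simp
qed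

lemma SS_integrable: "SS integrable_on {a..b}"
  using SS_int by blast

lemma SS_rec: "SS t = bspline 0 t + integral {t-1..t} SS"
proof -
  have "SS t = bspline 0 t + (\<Sum>n. bspline (Suc n) t)"
    unfolding SS_def using suminf_split_head[OF N_summable[of t]] by simp
  also have "(\<Sum>n. bspline (Suc n) t) = integral {t-1..t} SS"
    using SS_int[of "t-1" t] by (simp add: sums_iff)
  finally show ?thesis .
qed


definition PP :: "real \<Rightarrow> real" where "PP x = integral {-1..x} SS"

lemma PP_nonpos: "x \<le> 0 \<Longrightarrow> PP x = 0"
proof -
  assume x: "x \<le> 0"
  have "integral {-1..x} SS = integral {-1..x} (\<lambda>_. 0::real)"
  proof (rule integral_spike[of "{0}"])
    fix y assume "y \<in> {-1..x} - {0}"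
    then have "y < 0" using x by auto
    then show "0 = SS y" by (simp add: SS_neg)
  qed simp
  then show ?thesis unfolding PP_def by simp
qed

lemma PP_diff: "-1 \<le> y \<Longrightarrow> y \<le> x \<Longrightarrow> PP x - PP y = integral {y..x} SS"
proof -
  assume a: "-1 \<le> y" "y \<le> x"
  have "integral {-1..y} SS + integral {y..x} SS = integral {-1..x} SS"
    by (rule Henstock_Kurzweil_Integration.integral_combine) (use a in \<open>auto intro: SS_integrable\<close>)
  then show ?thesis unfolding PP_def by linarith
qed

lemma F_eq: "0 \<le> x \<Longrightarrow> integral {x-1..x} SS = PP x - PP (x-1)"
  using PP_diff[of "x-1" x] by simp

lemma PP_cont: "-1 \<le> a \<Longrightarrow> continuous_on {a..b} PP"
proof -
  assume a: "-1 \<le> a"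
  have "continuous_on {-1..b} PP" unfolding PP_def
    by (rule indefinite_integral_continuous_1[OF SS_integrable])
  then show ?thesis by (rule continuous_on_subset) (use a in auto)
qed

lemma PP_int: "-1 \<le> a \<Longrightarrow> PP integrable_on {a..b}"
  by (intro integrable_continuous_interval PP_cont)

lemma N0_fun: "bspline 0 = indicator {0..1}"
  by (rule ext) simp

lemma N0_int: "1 \<le> t \<Longrightarrow> integral {0..t} (bspline 0) = 1"
proof -
  assume t: "1 \<le> t"
  have e: "{0..1::real} \<inter> {0..t} = {0..1}" using t by auto
  show ?thesis unfolding N0_fun
    by (subst integral_indicator) (use t in \<open>simp_all add: e\<close>)
qed

lemma PP_shift_cont: "continuous_on {0..t} (\<lambda>x. PP (x-1))"
proof (rule continuous_on_compose2[OF PP_cont[of "-1" t], where f="\<lambda>x. x - 1"])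
  show "continuous_on {0..t} (\<lambda>x::real. x - 1)"
    by (intro continuous_on_diff continuous_on_id continuous_on_const)
qed auto

lemma PP_G: "1 \<le> t \<Longrightarrow> PP t = 1 + integral {t-1..t} PP"
proof -
  assume t: "1 \<le> t"
  have "PP t = integral {0..t} SS" using PP_diff[of 0 t] PP_nonpos[of 0] t by simp
  also have "\<dots> = integral {0..t} (\<lambda>x. bspline 0 x + (PP x - PP (x-1)))"
    by (rule integral_cong) (use SS_rec F_eq in auto)
  also have "\<dots> = integral {0..t} (bspline 0) + (integral {0..t} PP - integral {0..t} (\<lambda>x. PP (x-1)))"
  proof -
    have i1: "PP integrable_on {0..t}" by (rule PP_int) simp
    have i2: "(\<lambda>x. PP (x-1)) integrable_on {0..t}"
      by (rule integrable_continuous_interval[OF PP_shift_cont])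
    have "integral {0..t} (\<lambda>x. bspline 0 x + (PP x - PP (x-1))) = integral {0..t} (bspline 0) + integral {0..t} (\<lambda>x. PP x - PP (x-1))"
      by (rule integral_add[OF N_int integrable_diff[OF i1 i2]])
    also have "integral {0..t} (\<lambda>x. PP x - PP (x-1)) = integral {0..t} PP - integral {0..t} (\<lambda>x. PP (x-1))"
      by (rule integral_diff[OF i1 i2])
    finally show ?thesis .
  qed
  also have "integral {0..t} (\<lambda>x. PP (x-1)) = integral {-1..t-1} PP"
  proof -
    have "integral {0..t} (PP \<circ> (+) (-1)) = integral {0 + -1..t + -1} PP"
      by (rule integral_shift_Icc_real)
    moreover have "(PP \<circ> (+) (-1)) = (\<lambda>x. PP (x-1))" by (rule ext) simp
    ultimately show ?thesis by simp
  qed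
  also have "integral {-1..t-1} PP = integral {-1..0} PP + integral {0..t-1} PP"
    by (rule Henstock_Kurzweil_Integration.integral_combine[symmetric]) (use t in \<open>auto intro: PP_int\<close>)
  also have "integral {-1..0} PP = 0"
  proof -
    have "integral {-1..0} PP = integral {-1..0::real} (\<lambda>_. 0::real)"
      by (rule integral_cong) (auto intro: PP_nonpos)
    then show ?thesis by simp
  qed
  also have "integral {0..t} PP = integral {0..t-1} PP + integral {t-1..t} PP"
    by (rule Henstock_Kurzweil_Integration.integral_combine[symmetric]) (use t in \<open>auto intro: PP_int\<close>)
  finally show ?thesis using N0_int[OF t] by (simp add: N0_fun)
qed

lemma int_lin:
  fixes a b :: real
  assumes "a \<le> b"
  shows "integral {a..b} (\<lambda>x. x - a) = (b - a)^2 / 2"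
proof -
  have d: "((\<lambda>x. (x - a)^2 / 2) has_vector_derivative (x - a)) (at x within {a..b})" for x
  proof -
    have "((\<lambda>x. (x - a)^2 / 2) has_real_derivative (x - a)) (at x within {a..b})"
      by (auto intro!: derivative_eq_intros)
    then show ?thesis by (simp add: has_real_derivative_iff_has_vector_derivative)
  qed
  have "((\<lambda>x. x - a) has_integral ((b - a)^2 / 2 - (a - a)^2 / 2)) {a..b}"
    using Henstock_Kurzweil_Integration.fundamental_theorem_of_calculus[where a=a and b=b and f="\<lambda>x. (x - a)^2 / 2" and f'="\<lambda>x. x - a"] assms d
    by simp
  then show ?thesis by (simp add: integral_unique)
qed


lemma SS_int_bound:
  assumes "a \<le> x" and B: "\<And>y. y \<in> {a..x} \<Longrightarrow> \<bar>SS y - 2\<bar> \<le> B"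
  shows "\<bar>integral {a..x} (\<lambda>y. SS y - 2)\<bar> \<le> B * (x - a)"
proof -
  have i: "(\<lambda>y. SS y - 2) integrable_on {a..x}"
    by (intro integrable_diff SS_integrable integrable_const_ivl)
  have "integral {a..x} (\<lambda>y. SS y - 2) \<le> integral {a..x} (\<lambda>_. B)"
    by (rule integral_le[OF i]) (use B in \<open>auto simp: abs_le_iff\<close>)
  moreover have Bl: "-B \<le> SS y - 2" if "y \<in> {a..x}" for y using B[OF that] by linarith
  then have "integral {a..x} (\<lambda>_. -B) \<le> integral {a..x} (\<lambda>y. SS y - 2)"
    by (intro integral_le[OF _ i]) auto
  ultimately show ?thesis using assms(1) by (simp add: abs_le_iff algebra_simps)
qed

lemma contraction:
  assumes t: "1 < t" and B: "\<And>x. x \<in> {t-1..t} \<Longrightarrow> \<bar>SS x - 2\<bar> \<le> B"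
  shows "\<bar>SS t - 2\<bar> \<le> B / 2"
proof -
  define a where "a = t - 1"
  have a0: "0 \<le> a" and ta: "t = a + 1" using t unfolding a_def by auto
  have St: "SS t = PP t - PP a"
    using SS_rec[of t] F_eq[of t] t unfolding a_def by simp
  have G: "PP t = 1 + integral {a..t} PP" using PP_G[of t] t unfolding a_def by simp
  define h where "h x = PP x - PP a - 2 * (x - a)" for x
  have iP: "PP integrable_on {a..t}" by (rule PP_int) (use a0 in simp)
  have iL: "(\<lambda>x. 2 * (x - a)) integrable_on {a..t}"
    by (intro integrable_continuous_interval continuous_intros)
  have iL': "(\<lambda>x. B * (x - a)) integrable_on {a..t}"
    by (intro integrable_continuous_interval continuous_intros)
  have ih: "h integrable_on {a..t}" unfolding h_def
    by (intro integrable_diff iP iL integrable_const_ivl)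
  have lin: "integral {a..t} (\<lambda>x. x - a) = 1/2" using int_lin[of a t] ta by simp
  have hint: "integral {a..t} h = integral {a..t} PP - PP a - 1"
  proof -
    have "integral {a..t} h = integral {a..t} (\<lambda>x. PP x - PP a) - integral {a..t} (\<lambda>x. 2 * (x - a))"
      unfolding h_def by (rule integral_diff[OF integrable_diff[OF iP integrable_const_ivl] iL])
    also have "integral {a..t} (\<lambda>x. PP x - PP a) = integral {a..t} PP - integral {a..t} (\<lambda>_. PP a)"
      by (rule integral_diff[OF iP integrable_const_ivl])
    also have "integral {a..t} (\<lambda>x. 2 * (x - a)) = 1" by (simp only: integral_mult_right lin)
    also have "integral {a..t} (\<lambda>_. PP a) = PP a" using ta by simp
    finally show ?thesis .
  qed
  have eq: "SS t - 2 = integral {a..t} h" using St G hint by simp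
  have hb: "\<bar>h x\<bar> \<le> B * (x - a)" if x: "x \<in> {a..t}" for x
  proof -
    have "PP x - PP a = integral {a..x} SS" using PP_diff[of a x] x a0 by simp
    also have "\<dots> = integral {a..x} (\<lambda>y. SS y - 2) + 2 * (x - a)"
    proof -
      have "integral {a..x} (\<lambda>y. SS y - 2) = integral {a..x} SS - integral {a..x} (\<lambda>_. 2)"
        by (rule integral_diff[OF SS_integrable integrable_const_ivl])
      then show ?thesis using x by simp
    qed
    finally have "h x = integral {a..x} (\<lambda>y. SS y - 2)" unfolding h_def by simp
    moreover have "\<bar>integral {a..x} (\<lambda>y. SS y - 2)\<bar> \<le> B * (x - a)"
      by (rule SS_int_bound) (use x B in \<open>auto simp: a_def\<close>)
    ultimately show ?thesis by simp
  qed
  have "integral {a..t} h \<le> integral {a..t} (\<lambda>x. B * (x - a))"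
    by (rule integral_le[OF ih iL']) (use hb in \<open>auto simp: abs_le_iff\<close>)
  moreover have hl: "- (B * (x - a)) \<le> h x" if "x \<in> {a..t}" for x using hb[OF that] by linarith
  then have "integral {a..t} (\<lambda>x. - (B * (x - a))) \<le> integral {a..t} h"
    by (intro integral_le[OF _ ih] integrable_neg iL') auto
  moreover have "integral {a..t} (\<lambda>x. B * (x - a)) = B / 2" unfolding integral_mult_right lin by simp
  moreover have "integral {a..t} (\<lambda>x. - (B * (x - a))) = - (B / 2)"
    unfolding integral_neg integral_mult_right lin by simp
  ultimately show ?thesis unfolding eq abs_le_iff by linarith
qed


definition BB :: "nat \<Rightarrow> real" where
  "BB k = (SUP x\<in>{real k..real k + 1}. \<bar>SS x - 2\<bar>)"

lemma BB_bdd: "bdd_above ((\<lambda>x. \<bar>SS x - 2\<bar>) ` {real k..real k + 1})"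
proof (rule bdd_aboveI2)
  fix x assume x: "x \<in> {real k..real k + 1}"
  have "\<bar>SS x - 2\<bar> \<le> SS x + 2" using SS_nonneg[of x] by simp
  also have "\<dots> \<le> 2 * exp (2 * x) + 2" using SS_le[of x] by simp
  also have "\<dots> \<le> 2 * exp (2 * (real k + 1)) + 2" using x by simp
  finally show "\<bar>SS x - 2\<bar> \<le> 2 * exp (2 * (real k + 1)) + 2" .
qed

lemma BB_upper: "x \<in> {real k..real k + 1} \<Longrightarrow> \<bar>SS x - 2\<bar> \<le> BB k"
  unfolding BB_def by (rule cSUP_upper[OF _ BB_bdd])

lemma BB_nonneg: "0 \<le> BB k"
  using BB_upper[of "real k" k] by simp

lemma BB_step:
  assumes k: "1 \<le> k"
  shows "BB (Suc k) \<le> BB k / 2"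
proof -
  define M where "M = max (BB k) (BB (Suc k))"
  have "BB (Suc k) \<le> M / 2" unfolding BB_def
  proof (rule cSUP_least)
    fix x assume x: "x \<in> {real (Suc k)..real (Suc k) + 1}"
    show "\<bar>SS x - 2\<bar> \<le> M / 2"
    proof (rule contraction)
      show "1 < x" using x k by simp
      fix y assume y: "y \<in> {x - 1..x}"
      show "\<bar>SS y - 2\<bar> \<le> M"
      proof (cases "y \<le> real k + 1")
        case True
        then have "\<bar>SS y - 2\<bar> \<le> BB k" using x y by (intro BB_upper) auto
        then show ?thesis unfolding M_def by linarith
      next
        case False
        then have "\<bar>SS y - 2\<bar> \<le> BB (Suc k)" using x y by (intro BB_upper) auto
        then show ?thesis unfolding M_def by linarith
      qed
    qed
  qed simp
  then show ?thesis using BB_nonneg[of k] BB_nonneg[of "Suc k"] unfolding M_def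
    by (cases "BB k \<le> BB (Suc k)") (auto simp: max_def)
qed

lemma BB_decay: "BB (Suc m) \<le> BB 1 / 2^m"
proof (induction m)
  case 0 then show ?case by simp
next
  case (Suc m)
  have "BB (Suc (Suc m)) \<le> BB (Suc m) / 2" by (rule BB_step) simp
  also have "\<dots> \<le> BB 1 / 2^m / 2" using Suc by (simp add: divide_right_mono)
  finally show ?case by simp
qed

theorem mainTheorem13:
  shows "(\<forall>t::real. summable (\<lambda>n. bspline n t)) \<and>
         ((\<lambda>t::real. \<Sum>n. bspline n t) \<longlongrightarrow> 2) at_top"
proof
  show "\<forall>t::real. summable (\<lambda>n. bspline n t)" using N_summable by blast
  show "((\<lambda>t::real. \<Sum>n. bspline n t) \<longlongrightarrow> 2) at_top"
    unfolding SS_def[symmetric] tendsto_iff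
  proof (intro allI impI)
    fix e :: real assume e: "0 < e"
    define C where "C = BB 1 + 1"
    have C: "0 < C" unfolding C_def using BB_nonneg[of 1] by simp
    obtain m where m: "(1/2::real)^m < e / C"
      using real_arch_pow_inv[of "e / C" "1/2"] e C by auto
    have "dist (SS t) 2 < e" if t: "t \<ge> real m + 2" for t
    proof -
      define k where "k = nat \<lfloor>t\<rfloor>"
      have fl0: "int m + 2 \<le> \<lfloor>t\<rfloor>" using t by (simp add: le_floor_iff)
      have "real_of_int (int m + 2) \<le> real_of_int \<lfloor>t\<rfloor>" using fl0 by (simp only: of_int_le_iff)
      then have fl: "real m + 2 \<le> of_int \<lfloor>t\<rfloor>" by simp
      have kk: "real k = of_int \<lfloor>t\<rfloor>" unfolding k_def using fl by simp
      have tk: "t \<in> {real k..real k + 1}" unfolding kk atLeastAtMost_iff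
        using of_int_floor_le[of t] real_of_int_floor_add_one_ge[of t] by linarith
      have km: "m + 2 \<le> k" using fl kk by linarith
      then obtain j where j: "k = Suc j" and jm: "m \<le> j" by (cases k) auto
      have "\<bar>SS t - 2\<bar> \<le> BB k" by (rule BB_upper[OF tk])
      also have "\<dots> \<le> BB 1 / 2^j" unfolding j by (rule BB_decay)
      also have "\<dots> \<le> BB 1 / 2^m"
        using BB_nonneg[of 1] jm by (intro divide_left_mono) (auto intro: power_increasing)
      also have "\<dots> = BB 1 * (1/2)^m" by (simp add: power_one_over)
      also have "\<dots> \<le> C * (1/2)^m" unfolding C_def by (intro mult_right_mono) auto
      also have "\<dots> < C * (e / C)" using m C by (intro mult_strict_left_mono) auto
      also have "\<dots> = e" using C by simp
      finally show ?thesis by (simp add: dist_real_def)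
    qed
    then show "\<forall>\<^sub>F t in at_top. dist (SS t) 2 < e"
      unfolding eventually_at_top_linorder by blast
  qed
qed

end
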